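(* Let $n>24$, $0<\epsilon<\frac13$, $\delta>0$, and $m=\epsilon^{-2}n^{1+\delta}$ (assumed to be an integer). Then $$\mathsf P\left\{\left|\sum_{i=1}^n \frac{k_i(x)(k_i(x)-1)}{m(m-1)}\cdot\frac{1}{\|p\|^2}-1\right|\le 22\,\epsilon\right\}\ \ge\ 1-\frac{10}{9}e^{-n^{\delta}}.$$
   Context: Standing setup: $U$ is a finite set (the key space) with a probability measure $q$; $T=\{1,\dots,n\}$; $h:U\to T$ is an arbitrary function. $p_i=\sum_{u\in h^{-1}(i)}q(u)$ and $\|p\|^2=\sum_{i=1}^n p_i^2$. $U^m$ carries the product measure $q^m$, and $\mathsf P$ denotes probability under $q^m$ of the event for $x=(x_1,\dots,x_m)\in U^m$. $k_i(x)=|\{j: h(x_j)=i\}|$. *)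

theory Defs
  imports "HOL-Analysis.Analysis"
begin

text \<open>Key space U (finite set) with probability weights q; hash function h : U -> {1..n}.\<close>

definition pbin :: "'u set \<Rightarrow> ('u \<Rightarrow> real) \<Rightarrow> ('u \<Rightarrow> nat) \<Rightarrow> nat \<Rightarrow> real" where
  "pbin U q h i = (\<Sum>u\<in>{u\<in>U. h u = i}. q u)"

definition psqnorm :: "'u set \<Rightarrow> ('u \<Rightarrow> real) \<Rightarrow> ('u \<Rightarrow> nat) \<Rightarrow> nat \<Rightarrow> real" where
  "psqnorm U q h n = (\<Sum>i=1..n. (pbin U q h i)\<^sup>2)"

text \<open>k_i(x) for x = (x_0,...,x_{m-1}) in U^m, represented as x : nat => 'u on {..<m}.\<close>
definition kcount :: "('u \<Rightarrow> nat) \<Rightarrow> nat \<Rightarrow> (nat \<Rightarrow> 'u) \<Rightarrow> nat \<Rightarrow> nat" where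
  "kcount h m x i = card {j\<in>{..<m}. h (x j) = i}"

definition prob_prod :: "'u set \<Rightarrow> ('u \<Rightarrow> real) \<Rightarrow> nat \<Rightarrow> ((nat \<Rightarrow> 'u) \<Rightarrow> bool) \<Rightarrow> real" where
  "prob_prod U q m P = (\<Sum>x\<in>{x\<in>PiE {..<m} (\<lambda>_. U). P x}. \<Prod>j<m. q (x j))"

end

theory Submission
  imports Defs "HOL-Combinatorics.Permutations"
begin

definition SS :: "'u set \<Rightarrow> ('u\<Rightarrow>real) \<Rightarrow> nat \<Rightarrow> ((nat\<Rightarrow>'u)\<Rightarrow>real) \<Rightarrow> real" where
 "SS U q m F = (\<Sum>x\<in>PiE {..<m} (\<lambda>_. U). (\<Prod>j<m. q (x j)) * F x)"

lemma SS_Suc: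
  assumes "finite U"
  shows "SS U q (Suc m) F = SS U q m (\<lambda>x. \<Sum>u\<in>U. q u * F (x(m:=u)))"
proof -
  have e: "PiE {..<Suc m} (\<lambda>_. U) = (\<lambda>(y, g). g(m := y)) ` (U \<times> PiE {..<m} (\<lambda>_. U))"
    by (simp add: lessThan_Suc PiE_insert_eq)
  have inj: "inj_on (\<lambda>(y, g). g(m := y)) (U \<times> PiE {..<m} (\<lambda>_. U))"
    using inj_combinator[of m "{..<m}" "\<lambda>_. U"] by simp
  have w: "(\<Prod>j<Suc m. q ((g(m:=y)) j)) = q y * (\<Prod>j<m. q (g j))" for g y
  proof -
    have "(\<Prod>j<m. q ((g(m:=y)) j)) = (\<Prod>j<m. q (g j))" by (rule prod.cong) auto
    then show ?thesis by (simp add: lessThan_Suc)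
  qed
  have "SS U q (Suc m) F = (\<Sum>(y,g)\<in>U \<times> PiE {..<m} (\<lambda>_. U). q y * (\<Prod>j<m. q (g j)) * F (g(m:=y)))"
    unfolding SS_def e by (subst sum.reindex[OF inj]) (simp add: case_prod_beta w mult_ac)
  also have "\<dots> = (\<Sum>y\<in>U. \<Sum>g\<in>PiE {..<m} (\<lambda>_. U). q y * (\<Prod>j<m. q (g j)) * F (g(m:=y)))"
    by (simp add: sum.cartesian_product)
  also have "\<dots> = (\<Sum>g\<in>PiE {..<m} (\<lambda>_. U). \<Sum>y\<in>U. q y * (\<Prod>j<m. q (g j)) * F (g(m:=y)))"
    by (rule sum.swap)
  also have "\<dots> = SS U q m (\<lambda>x. \<Sum>u\<in>U. q u * F (x(m:=u)))"
    unfolding SS_def by (simp add: sum_distrib_left mult_ac)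
  finally show ?thesis .
qed

lemma SS_0: "SS U q 0 F = F (\<lambda>_. undefined)"
  unfolding SS_def by simp

lemma SS_cmult: "SS U q m (\<lambda>x. c * F x) = c * SS U q m F"
  unfolding SS_def by (simp add: sum_distrib_left mult_ac)

lemma SS_add: "SS U q m (\<lambda>x. F x + G x) = SS U q m F + SS U q m G"
  unfolding SS_def by (simp add: sum.distrib distrib_left)

lemma SS_diff: "SS U q m (\<lambda>x. F x - G x) = SS U q m F - SS U q m G"
  unfolding SS_def by (simp add: sum_subtractf right_diff_distrib)

lemma SS_cong: "(\<And>x. x \<in> PiE {..<m} (\<lambda>_. U) \<Longrightarrow> F x = G x) \<Longrightarrow> SS U q m F = SS U q m G"
  unfolding SS_def by (intro sum.cong refl) simp

lemma SS_sum: "finite A \<Longrightarrow> SS U q m (\<lambda>x. \<Sum>a\<in>A. F a x) = (\<Sum>a\<in>A. SS U q m (F a))"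
  unfolding SS_def by (simp add: sum_distrib_left sum.swap[of _ A])

lemma SS_mono:
  assumes "\<forall>u\<in>U. q u \<ge> 0" "\<And>x. x \<in> PiE {..<m} (\<lambda>_. U) \<Longrightarrow> F x \<le> G x"
  shows "SS U q m F \<le> SS U q m G"
  unfolding SS_def
proof (rule sum_mono)
  fix x assume x: "x \<in> PiE {..<m} (\<lambda>_. U)"
  have "(\<Prod>j<m. q (x j)) \<ge> 0" using x assms(1) by (intro prod_nonneg) auto
  then show "(\<Prod>j<m. q (x j)) * F x \<le> (\<Prod>j<m. q (x j)) * G x"
    using assms(2)[OF x] by (rule mult_left_mono[rotated])
qed

lemma SS_one:
  assumes "finite U" "(\<Sum>u\<in>U. q u) = 1"
  shows "SS U q m (\<lambda>_. 1) = 1"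
proof (induction m)
  case 0 then show ?case by (simp add: SS_0)
next
  case (Suc m) then show ?case using assms by (simp add: SS_Suc)
qed

lemma SS_ignore:
  assumes "finite U" "(\<Sum>u\<in>U. q u) = 1" "m0 \<le> m"
    and "\<And>x y. (\<forall>j<m0. x j = y j) \<Longrightarrow> F x = F y"
  shows "SS U q m F = SS U q m0 F"
  using assms(3)
proof (induction m rule: dec_induct)
  case base then show ?case by simp
next
  case (step m)
  have "F (x(m:=u)) = F x" for x u using assms(4)[of "x(m:=u)" x] step(1) by auto
  then show ?case using step assms(1,2) by (simp add: SS_Suc flip: sum_distrib_right)
qed

lemma SS_pairs_aux:
  assumes "finite U"
  shows "SS U q (2*K) (\<lambda>x. \<Prod>r<K. g (x(2*r)) (x(2*r+1))) = (\<Sum>u\<in>U. \<Sum>v\<in>U. q u * q v * g u v)^K"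
proof (induction K)
  case 0 then show ?case by (simp add: SS_0)
next
  case (Suc K)
  let ?F = "\<lambda>K x. \<Prod>r<K. g (x(2*r)) (x(2*r+1))"
  have eq: "?F (Suc K) (x(2*K:=u, Suc (2*K):=v)) = ?F K x * g u v" for x u v
  proof -
    have "?F K (x(2*K:=u, Suc (2*K):=v)) = ?F K x" by (rule prod.cong) auto
    then show ?thesis by simp
  qed
  have "SS U q (2*Suc K) (?F (Suc K)) = SS U q (Suc (Suc (2*K))) (?F (Suc K))" by simp
  also have "\<dots> = SS U q (2*K) (\<lambda>x. \<Sum>u\<in>U. q u * (\<Sum>v\<in>U. q v * ?F (Suc K) (x(2*K:=u, Suc (2*K):=v))))"
    using assms by (simp only: SS_Suc)
  also have "\<dots> = SS U q (2*K) (\<lambda>x. (\<Sum>u\<in>U. \<Sum>v\<in>U. q u * q v * g u v) * ?F K x)"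
    by (simp only: eq) (simp add: sum_distrib_left sum_distrib_right mult_ac)
  also have "\<dots> = (\<Sum>u\<in>U. \<Sum>v\<in>U. q u * q v * g u v) ^ Suc K"
    using Suc.IH by (simp add: SS_cmult)
  finally show ?case .
qed

lemma SS_pairs:
  assumes "finite U" "(\<Sum>u\<in>U. q u) = 1" "2*K \<le> m"
  shows "SS U q m (\<lambda>x. \<Prod>r<K. g (x(2*r)) (x(2*r+1))) = (\<Sum>u\<in>U. \<Sum>v\<in>U. q u * q v * g u v)^K"
proof -
  have "SS U q m (\<lambda>x. \<Prod>r<K. g (x(2*r)) (x(2*r+1))) = SS U q (2*K) (\<lambda>x. \<Prod>r<K. g (x(2*r)) (x(2*r+1)))"
    by (rule SS_ignore[OF assms]) (intro prod.cong; auto)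
  then show ?thesis using SS_pairs_aux[OF assms(1)] by simp
qed

lemma SS_perm:
  assumes "\<sigma> permutes {..<m}"
  shows "SS U q m (\<lambda>x. F (x \<circ> \<sigma>)) = SS U q m F"
proof -
  let ?A = "PiE {..<m} (\<lambda>_. U)"
  have mem: "x \<circ> \<tau> \<in> ?A" if "x \<in> ?A" "\<tau> permutes {..<m}" for x \<tau>
    proof -
    have "\<tau> j < m" if "j < m" for j using permutes_in_image[OF \<open>\<tau> permutes {..<m}\<close>, of j] that by simp
    then show ?thesis using that by (auto simp: PiE_iff extensional_def permutes_not_in)
  qed
  have bij: "bij_betw (\<lambda>x. x \<circ> \<sigma>) ?A ?A"
  proof (rule bij_betwI[where g="\<lambda>x. x \<circ> inv \<sigma>"])
    show "(\<lambda>x. x \<circ> \<sigma>) \<in> ?A \<rightarrow> ?A" using mem assms by auto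
    show "(\<lambda>x. x \<circ> inv \<sigma>) \<in> ?A \<rightarrow> ?A" using mem permutes_inv[OF assms] by auto
    show "x \<circ> \<sigma> \<circ> inv \<sigma> = x" for x using permutes_inv_o[OF assms] by (metis comp_assoc comp_id)
    show "x \<circ> inv \<sigma> \<circ> \<sigma> = x" for x using permutes_inv_o[OF assms] by (metis comp_assoc comp_id)
  qed
  have w: "(\<Prod>j<m. q (x (\<sigma> j))) = (\<Prod>j<m. q (x j))" for x
    using prod.permute[OF assms, of "\<lambda>j. q (x j)"] by (simp add: o_def)
  show ?thesis unfolding SS_def
    using sum.reindex_bij_betw[OF bij, of "\<lambda>y. (\<Prod>j<m. q (y j)) * F y"] by (simp add: w)
qed

lemma perm_pair_shift:
  assumes "a < m" "b < m" "a \<noteq> b" "a' < m" "b' < m" "a' \<noteq> b'"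
  shows "(\<Sum>\<sigma>\<in>{\<sigma>. \<sigma> permutes {..<m}}. f (\<sigma> a) (\<sigma> b)) = (\<Sum>\<sigma>\<in>{\<sigma>. \<sigma> permutes {..<m}}. f (\<sigma> a') (\<sigma> b'))"
proof -
  define b'' where "b'' = Transposition.transpose a a' b"
  define \<tau> where "\<tau> = Transposition.transpose b'' b' \<circ> Transposition.transpose a a'"
  have b''m: "b'' < m" using assms unfolding b''_def by (auto simp: Transposition.transpose_def)
  have b''a': "b'' \<noteq> a'" using assms unfolding b''_def by (auto simp: Transposition.transpose_def)
  have ta: "\<tau> a = a'" using b''a' assms unfolding \<tau>_def by (auto simp: Transposition.transpose_def)
  have tb: "\<tau> b = b'" unfolding \<tau>_def b''_def by (simp add: Transposition.transpose_def)
  have tp: "\<tau> permutes {..<m}" unfolding \<tau>_def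
    using assms b''m by (intro permutes_compose permutes_swap_id) auto
  show ?thesis
    using sum_permutations_compose_right[OF tp, of "\<lambda>\<sigma>. f (\<sigma> a) (\<sigma> b)"] ta tb by simp
qed

lemma perm_pair_sum:
  assumes "a < m" "b < m" "a \<noteq> b"
  shows "(\<Sum>\<sigma>\<in>{\<sigma>. \<sigma> permutes {..<m}}. f (\<sigma> a) (\<sigma> b))
       = fact m * (\<Sum>j<m. \<Sum>l\<in>{..<m}-{j}. f j l) / (real m * (real m - 1))"
proof -
  let ?P = "{\<sigma>. \<sigma> permutes {..<m}}"
  let ?A = "\<lambda>a b. (\<Sum>\<sigma>\<in>?P. f (\<sigma> a) (\<sigma> b))"
  have m2: "m \<ge> 2" using assms by auto
  have inner: "(\<Sum>a<m. \<Sum>b\<in>{..<m}-{a}. f (\<sigma> a) (\<sigma> b)) = (\<Sum>j<m. \<Sum>l\<in>{..<m}-{j}. f j l)"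
    if s: "\<sigma> permutes {..<m}" for \<sigma>
  proof -
    have im: "\<sigma> ` {..<m} = {..<m}" using permutes_image[OF s] .
    have inj: "inj_on \<sigma> X" for X using permutes_inj[OF s] by (auto intro: inj_on_subset)
    have im2: "\<sigma> ` ({..<m}-{a}) = {..<m}-{\<sigma> a}" for a
      using im permutes_inj[OF s] by (auto simp: inj_eq)
    have "(\<Sum>a<m. \<Sum>b\<in>{..<m}-{a}. f (\<sigma> a) (\<sigma> b)) = (\<Sum>a<m. \<Sum>l\<in>{..<m}-{\<sigma> a}. f (\<sigma> a) l)"
    proof (rule sum.cong[OF refl])
      fix a
      show "(\<Sum>b\<in>{..<m}-{a}. f (\<sigma> a) (\<sigma> b)) = (\<Sum>l\<in>{..<m}-{\<sigma> a}. f (\<sigma> a) l)"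
        using sum.reindex[OF inj[of "{..<m}-{a}"], of "\<lambda>l. f (\<sigma> a) l"] im2[of a] by simp
    qed
    also have "\<dots> = (\<Sum>j<m. \<Sum>l\<in>{..<m}-{j}. f j l)"
      using sum.reindex[OF inj[of "{..<m}"], of "\<lambda>j. \<Sum>l\<in>{..<m}-{j}. f j l"] im by simp
    finally show ?thesis .
  qed
  have "(\<Sum>a<m. \<Sum>b\<in>{..<m}-{a}. ?A a b) = (\<Sum>\<sigma>\<in>?P. \<Sum>a<m. \<Sum>b\<in>{..<m}-{a}. f (\<sigma> a) (\<sigma> b))"
    by (simp add: sum.swap[of _ ?P])
  also have "\<dots> = (\<Sum>\<sigma>\<in>?P. (\<Sum>j<m. \<Sum>l\<in>{..<m}-{j}. f j l))"
    by (rule sum.cong[OF refl]) (simp add: inner)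
  also have "\<dots> = fact m * (\<Sum>j<m. \<Sum>l\<in>{..<m}-{j}. f j l)"
    by (simp add: card_permutations)
  finally have e1: "(\<Sum>a<m. \<Sum>b\<in>{..<m}-{a}. ?A a b) = fact m * (\<Sum>j<m. \<Sum>l\<in>{..<m}-{j}. f j l)" .
  have "(\<Sum>a<m. \<Sum>b\<in>{..<m}-{a}. ?A a b) = (\<Sum>a<m. \<Sum>b\<in>{..<m}-{a}. ?A 0 1)"
    using m2 assms by (intro sum.cong[OF refl] perm_pair_shift) auto
  also have "\<dots> = real m * (real m - 1) * ?A 0 1"
    using m2 by (simp add: card_Diff_singleton of_nat_diff)
  finally have e2: "(\<Sum>a<m. \<Sum>b\<in>{..<m}-{a}. ?A a b) = real m * (real m - 1) * ?A 0 1" .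
  have "?A a b = ?A 0 1" using m2 assms by (intro perm_pair_shift) auto
  moreover have "real m * (real m - 1) > 0" using m2 by auto
  moreover have e3: "real m * (real m - 1) * ?A 0 1 = fact m * (\<Sum>j<m. \<Sum>l\<in>{..<m}-{j}. f j l)"
    using e1 e2 by simp
  ultimately have "?A 0 1 = fact m * (\<Sum>j<m. \<Sum>l\<in>{..<m}-{j}. f j l) / (real m * (real m - 1))"
    using m2 by (simp only: eq_divide_eq mult.commute) simp
  then show ?thesis using \<open>?A a b = ?A 0 1\<close> by simp
qed

lemma perm_avg:
  assumes "m \<ge> 2"
  shows "(\<Sum>\<sigma>\<in>{\<sigma>. \<sigma> permutes {..<m}}. \<Sum>r<m div 2. f (\<sigma>(2*r)) (\<sigma>(2*r+1)))
     = real (m div 2) * (fact m * (\<Sum>j<m. \<Sum>l\<in>{..<m}-{j}. f j l) / (real m * (real m - 1)))"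
proof -
  have "(\<Sum>\<sigma>\<in>{\<sigma>. \<sigma> permutes {..<m}}. \<Sum>r<m div 2. f (\<sigma>(2*r)) (\<sigma>(2*r+1)))
     = (\<Sum>r<m div 2. \<Sum>\<sigma>\<in>{\<sigma>. \<sigma> permutes {..<m}}. f (\<sigma>(2*r)) (\<sigma>(2*r+1)))"
    by (rule sum.swap)
  also have "\<dots> = (\<Sum>r<m div 2. fact m * (\<Sum>j<m. \<Sum>l\<in>{..<m}-{j}. f j l) / (real m * (real m - 1)))"
  proof (rule sum.cong[OF refl])
    fix r assume "r \<in> {..<m div 2}"
    then have "2*r+1 < m" by auto
    then show "(\<Sum>\<sigma>\<in>{\<sigma>. \<sigma> permutes {..<m}}. f (\<sigma>(2*r)) (\<sigma>(2*r+1))) = fact m * (\<Sum>j<m. \<Sum>l\<in>{..<m}-{j}. f j l) / (real m * (real m - 1))"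
      by (intro perm_pair_sum) auto
  qed
  also have "\<dots> = real (m div 2) * (fact m * (\<Sum>j<m. \<Sum>l\<in>{..<m}-{j}. f j l) / (real m * (real m - 1)))"
    by simp
  finally show ?thesis .
qed

lemma mgf:
  fixes h :: "'u \<Rightarrow> nat" and \<theta> :: real
  assumes U: "finite U" and q0: "\<forall>u\<in>U. q u \<ge> 0" and q1: "(\<Sum>u\<in>U. q u) = 1" and m2: "m \<ge> 2"
  shows "SS U q m (\<lambda>x. exp (\<theta> * ((\<Sum>j<m. \<Sum>l\<in>{..<m}-{j}. if h (x j) = h (x l) then 1 else 0) / (real m*(real m-1)))))
     \<le> exp (real (m div 2) * (\<Sum>u\<in>U. \<Sum>v\<in>U. q u * q v * (if h u = h v then 1 else 0)) * (exp (\<theta> / real (m div 2)) - 1))"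
proof -
  define K where "K = m div 2"
  define c0 where "c0 = (\<Sum>u\<in>U. \<Sum>v\<in>U. q u * q v * (if h u = h v then 1 else (0::real)))"
  define P where "P = {\<sigma>. \<sigma> permutes {..<m}}"
  define N :: real where "N = fact m"
  define I where "I = (\<lambda>(x::nat\<Rightarrow>'u) (j::nat) (l::nat). if h (x j) = h (x l) then 1 else (0::real))"
  define T where "T = (\<lambda>\<sigma> x. \<Sum>r<K. I x (\<sigma>(2*r)) (\<sigma>(2*r+1)))"
  define g where "g = (\<lambda>u v. exp (\<theta> / real K * (if h u = h v then 1 else 0)))"
  define c where "c = (\<Sum>u\<in>U. \<Sum>v\<in>U. q u * q v * g u v)"
  have K0: "real K > 0" using m2 unfolding K_def by auto
  have N0: "N > 0" unfolding N_def by simp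
  have finP: "finite P" unfolding P_def by (simp add: finite_permutations)
  have cardP: "real (card P) = N" unfolding P_def N_def by (simp add: card_permutations)
  have Pne: "P \<noteq> {}" using cardP N0 by auto
  have m1: "real m * (real m - 1) > 0" using m2 by auto
  have key: "\<theta> * ((\<Sum>j<m. \<Sum>l\<in>{..<m}-{j}. I x j l) / (real m*(real m-1)))
        = (\<Sum>\<sigma>\<in>P. (1/N) *\<^sub>R (\<theta> / real K * T \<sigma> x))" for x
  proof -
    have "(\<Sum>\<sigma>\<in>P. (1/N) *\<^sub>R (\<theta> / real K * T \<sigma> x)) = \<theta> / (real K * N) * (\<Sum>\<sigma>\<in>P. T \<sigma> x)"
      by (simp add: sum_distrib_left mult.commute sum_divide_distrib)
    also have "(\<Sum>\<sigma>\<in>P. T \<sigma> x) = real K * (N * (\<Sum>j<m. \<Sum>l\<in>{..<m}-{j}. I x j l) / (real m * (real m - 1)))"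
      unfolding P_def T_def K_def N_def by (rule perm_avg[OF m2])
    finally show ?thesis using K0 N0 by simp
  qed
  have jensen: "exp (\<theta> * ((\<Sum>j<m. \<Sum>l\<in>{..<m}-{j}. I x j l) / (real m*(real m-1))))
       \<le> (\<Sum>\<sigma>\<in>P. (1/N) * exp (\<theta> / real K * T \<sigma> x))" for x
    unfolding key
    by (rule convex_on_sum[OF finP Pne exp_convex]) (use cardP N0 in auto)
  have Texp: "exp (\<theta> / real K * T \<sigma> x) = (\<lambda>y. \<Prod>r<K. g (y(2*r)) (y(2*r+1))) (x \<circ> \<sigma>)" for \<sigma> x
    unfolding T_def g_def I_def by (simp add: sum_distrib_left exp_sum)
  have c_eq: "c = 1 + c0 * (exp (\<theta> / real K) - 1)"
  proof -
    have "c = (\<Sum>u\<in>U. \<Sum>v\<in>U. q u * q v + q u * q v * (if h u = h v then 1 else 0) * (exp (\<theta> / real K) - 1))"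
      unfolding c_def g_def by (intro sum.cong refl) (simp add: algebra_simps)
    also have "\<dots> = (\<Sum>u\<in>U. q u) * (\<Sum>v\<in>U. q v) + c0 * (exp (\<theta> / real K) - 1)"
      unfolding c0_def by (simp add: sum.distrib sum_distrib_left sum_distrib_right mult_ac)
    finally show ?thesis using q1 by simp
  qed
  have c_nonneg: "c \<ge> 0" unfolding c_def g_def using q0 by (intro sum_nonneg mult_nonneg_nonneg) auto
  have c_le: "c ^ K \<le> exp (real K * c0 * (exp (\<theta> / real K) - 1))"
  proof -
    have "c \<le> exp (c0 * (exp (\<theta> / real K) - 1))" unfolding c_eq by (rule exp_ge_add_one_self[THEN order.trans[OF _ order_refl], simplified add.commute]) 
    then have "c ^ K \<le> exp (c0 * (exp (\<theta> / real K) - 1)) ^ K" by (rule power_mono[OF _ c_nonneg])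
    also have "\<dots> = exp (real K * c0 * (exp (\<theta> / real K) - 1))"
      by (simp add: exp_of_nat_mult[symmetric] mult_ac)
    finally show ?thesis .
  qed
  have "SS U q m (\<lambda>x. exp (\<theta> * ((\<Sum>j<m. \<Sum>l\<in>{..<m}-{j}. I x j l) / (real m*(real m-1)))))
      \<le> SS U q m (\<lambda>x. \<Sum>\<sigma>\<in>P. (1/N) * exp (\<theta> / real K * T \<sigma> x))"
    by (rule SS_mono[OF q0 jensen])
  also have "\<dots> = (\<Sum>\<sigma>\<in>P. (1/N) * SS U q m (\<lambda>x. (\<lambda>y. \<Prod>r<K. g (y(2*r)) (y(2*r+1))) (x \<circ> \<sigma>)))"
    by (simp only: SS_sum[OF finP] SS_cmult Texp)
  also have "\<dots> = (\<Sum>\<sigma>\<in>P. (1/N) * c ^ K)"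
  proof (rule sum.cong[OF refl])
    fix \<sigma> assume "\<sigma> \<in> P"
    then have "SS U q m (\<lambda>x. (\<lambda>y. \<Prod>r<K. g (y(2*r)) (y(2*r+1))) (x \<circ> \<sigma>)) = SS U q m (\<lambda>y. \<Prod>r<K. g (y(2*r)) (y(2*r+1)))"
      unfolding P_def by (intro SS_perm) auto
    also have "\<dots> = c ^ K" unfolding c_def by (rule SS_pairs[OF U q1]) (simp add: K_def)
    finally show "(1/N) * SS U q m (\<lambda>x. (\<lambda>y. \<Prod>r<K. g (y(2*r)) (y(2*r+1))) (x \<circ> \<sigma>)) = (1/N) * c ^ K" by simp
  qed
  also have "\<dots> = c ^ K" using cardP N0 by simp
  also note c_le
  finally show ?thesis unfolding I_def K_def c0_def .
qed

lemma card_as_sum: fixes m :: nat shows "real (card {j\<in>{..<m}. P j}) = (\<Sum>j<m. if P j then 1 else 0)"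
  using sum.inter_filter[OF finite_lessThan[of m], where P=P and g="\<lambda>_. (1::real)"] by simp

lemma pairs_count:
  fixes m n :: nat and y :: "nat \<Rightarrow> nat"
  assumes "\<forall>j<m. y j \<in> {1..n}"
  shows "(\<Sum>i=1..n. real (card {j\<in>{..<m}. y j = i}) * (real (card {j\<in>{..<m}. y j = i}) - 1))
       = (\<Sum>j<m. \<Sum>l\<in>{..<m}-{j}. if y j = y l then 1 else 0)"
proof -
  define a where "a = (\<lambda>i j. if y j = i then 1 else (0::real))"
  have one: "real (card {j\<in>{..<m}. y j = i}) * (real (card {j\<in>{..<m}. y j = i}) - 1)
      = (\<Sum>j<m. \<Sum>l\<in>{..<m}-{j}. a i j * a i l)" for i
  proof -
    have c: "real (card {j\<in>{..<m}. y j = i}) = (\<Sum>j<m. a i j)" unfolding a_def by (rule card_as_sum)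
    have "(\<Sum>j<m. \<Sum>l\<in>{..<m}-{j}. a i j * a i l) = (\<Sum>j<m. (\<Sum>l<m. a i j * a i l) - a i j * a i j)"
    proof (rule sum.cong[OF refl])
      fix j assume "j \<in> {..<m}"
      then show "(\<Sum>l\<in>{..<m}-{j}. a i j * a i l) = (\<Sum>l<m. a i j * a i l) - a i j * a i j"
        using sum.remove[OF finite_lessThan[of m], where x=j and g="\<lambda>l. a i j * a i l"] by simp
    qed
    also have "\<dots> = (\<Sum>j<m. \<Sum>l<m. a i j * a i l) - (\<Sum>j<m. a i j)"
    proof -
      have aa: "a i j * a i j = a i j" for j by (simp add: a_def)
      show ?thesis by (simp add: sum_subtractf aa)
    qed
    also have "\<dots> = (\<Sum>j<m. a i j) * (\<Sum>l<m. a i l) - (\<Sum>j<m. a i j)"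
      by (simp add: sum_product)
    finally show ?thesis unfolding c by (simp add: algebra_simps)
  qed
  have "(\<Sum>i=1..n. \<Sum>j<m. \<Sum>l\<in>{..<m}-{j}. a i j * a i l) = (\<Sum>j<m. \<Sum>l\<in>{..<m}-{j}. \<Sum>i=1..n. a i j * a i l)"
  proof -
    have "(\<Sum>i=1..n. \<Sum>j<m. \<Sum>l\<in>{..<m}-{j}. a i j * a i l) = (\<Sum>j<m. \<Sum>i=1..n. \<Sum>l\<in>{..<m}-{j}. a i j * a i l)"
      by (rule sum.swap)
    also have "\<dots> = (\<Sum>j<m. \<Sum>l\<in>{..<m}-{j}. \<Sum>i=1..n. a i j * a i l)"
      by (rule sum.cong[OF refl], rule sum.swap)
    finally show ?thesis .
  qed
  also have "\<dots> = (\<Sum>j<m. \<Sum>l\<in>{..<m}-{j}. if y j = y l then 1 else 0)"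
  proof (rule sum.cong[OF refl], rule sum.cong[OF refl])
    fix j l assume "j \<in> {..<m}" "l \<in> {..<m}-{j}"
    then have "y j \<in> {1..n}" using assms by auto
    then show "(\<Sum>i=1..n. a i j * a i l) = (if y j = y l then 1 else 0)"
    proof -
      have "(\<Sum>i=1..n. a i j * a i l) = (\<Sum>i\<in>{1..n}. if i = y j then (if y j = y l then 1 else 0) else 0)"
        by (rule sum.cong[OF refl]) (auto simp: a_def)
      also have "\<dots> = (if y j = y l then 1 else 0)" using \<open>y j \<in> {1..n}\<close> by (subst sum.delta) auto
      finally show ?thesis .
    qed
  qed
  finally show ?thesis by (simp only: one)
qed

lemma pbin_sum:
  assumes "finite U" "\<forall>u\<in>U. h u \<in> {1..n}"
  shows "(\<Sum>i=1..n. pbin U q h i * f i) = (\<Sum>u\<in>U. q u * f (h u))"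
proof -
  have "(\<Sum>i=1..n. pbin U q h i * f i) = (\<Sum>i=1..n. \<Sum>u\<in>U. if h u = i then q u * f i else 0)"
    unfolding pbin_def by (intro sum.cong refl) (simp only: sum_distrib_right sum.inter_filter[OF assms(1)], rule sum.cong[OF refl], simp)
  also have "\<dots> = (\<Sum>u\<in>U. \<Sum>i=1..n. if h u = i then q u * f i else 0)" by (rule sum.swap)
  also have "\<dots> = (\<Sum>u\<in>U. q u * f (h u))"
    using assms(2) by (intro sum.cong refl) (simp add: sum.delta)
  finally show ?thesis .
qed

lemma c0_eq:
  assumes "finite U" "\<forall>u\<in>U. h u \<in> {1..n}"
  shows "(\<Sum>u\<in>U. \<Sum>v\<in>U. q u * q v * (if h u = h v then 1 else 0)) = psqnorm U q h n"
proof -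
  have "psqnorm U q h n = (\<Sum>i=1..n. pbin U q h i * pbin U q h i)"
    unfolding psqnorm_def by (simp add: power2_eq_square)
  also have "\<dots> = (\<Sum>u\<in>U. q u * pbin U q h (h u))" by (rule pbin_sum[OF assms])
  also have "\<dots> = (\<Sum>u\<in>U. \<Sum>v\<in>U. q u * q v * (if h u = h v then 1 else 0))"
  proof (rule sum.cong[OF refl])
    fix u
    have "q u * pbin U q h (h u) = (\<Sum>v\<in>{v\<in>U. h v = h u}. q u * q v)"
      unfolding pbin_def by (simp add: sum_distrib_left)
    also have "\<dots> = (\<Sum>v\<in>U. if h v = h u then q u * q v else 0)"
      by (rule sum.inter_filter[OF assms(1)])
    also have "\<dots> = (\<Sum>v\<in>U. q u * q v * (if h u = h v then 1 else 0))"
      by (intro sum.cong refl) auto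
    finally show "q u * pbin U q h (h u) = (\<Sum>v\<in>U. q u * q v * (if h u = h v then 1 else 0))" .
  qed
  finally show ?thesis by simp
qed

lemma psq_lower:
  assumes "finite U" "\<forall>u\<in>U. h u \<in> {1..n}" "(\<Sum>u\<in>U. q u) = 1" "n > 0"
  shows "psqnorm U q h n \<ge> 1 / real n"
proof -
  have s1: "(\<Sum>i=1..n. pbin U q h i) = 1"
  proof -
    have "(\<Sum>i=1..n. pbin U q h i * 1) = (\<Sum>u\<in>U. q u * 1)" by (rule pbin_sum[OF assms(1,2)])
    then show ?thesis using assms(3) by simp
  qed
  have "0 \<le> (\<Sum>i=1..n. (pbin U q h i - 1/real n)\<^sup>2)" by (rule sum_nonneg) simp
  also have "\<dots> = psqnorm U q h n - 2/real n * (\<Sum>i=1..n. pbin U q h i) + real n * (1/real n)^2"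
    unfolding psqnorm_def by (simp add: power2_diff sum.distrib sum_subtractf sum_distrib_left mult_ac)
  also have "\<dots> = psqnorm U q h n - 1/real n"
    unfolding s1 using assms(4) by (simp add: power2_eq_square)
  finally show ?thesis by simp
qed

lemma prob_prod_SS:
  assumes "finite U" shows "prob_prod U q m P = SS U q m (\<lambda>x. if P x then 1 else 0)"
proof -
  have fin: "finite (PiE {..<m} (\<lambda>_. U))" using assms by (simp add: finite_PiE)
  show ?thesis unfolding prob_prod_def SS_def sum.inter_filter[OF fin] by (rule sum.cong[OF refl]) simp
qed

lemma exp_neg_bound: "0 \<le> (e::real) \<Longrightarrow> exp (- e) \<le> 1 - e + e\<^sup>2"
proof -
  assume e: "0 \<le> e"
  have "exp (-e) = 1 / exp e" by (simp add: exp_minus field_simps)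
  also have "\<dots> \<le> 1 / (1 + e)" using e by (intro divide_left_mono) (auto simp: exp_ge_add_one_self add_pos_nonneg)
  also have "\<dots> \<le> 1 - e + e\<^sup>2"
  proof -
    have "1 \<le> (1 - e + e\<^sup>2) * (1 + e)" using e by (simp add: algebra_simps power2_eq_square power3_eq_cube)
    then show ?thesis using e by (simp add: divide_le_eq)
  qed
  finally show ?thesis .
qed

theorem corollary1:
  fixes U :: "'u set" and q :: "'u \<Rightarrow> real" and h :: "'u \<Rightarrow> nat"
    and n m :: nat and \<epsilon> \<delta> :: real
  assumes "finite U"
    and "\<forall>u\<in>U. q u \<ge> 0" and "(\<Sum>u\<in>U. q u) = 1"
    and "\<forall>u\<in>U. h u \<in> {1..n}"
    and "n > 24" and "0 < \<epsilon>" and "\<epsilon> < 1/3" and "\<delta> > 0"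
    and "real m = \<epsilon> powr (-2) * real n powr (1 + \<delta>)"
  shows "prob_prod U q m (\<lambda>x. \<bar>(\<Sum>i=1..n. real (kcount h m x i) * (real (kcount h m x i) - 1)
              / (real m * (real m - 1))) * (1 / psqnorm U q h n) - 1\<bar> \<le> 22 * \<epsilon>)
         \<ge> 1 - 10/9 * exp (- (real n powr \<delta>))"
proof -
  note U = assms(1) and q0 = assms(2) and q1 = assms(3) and hU = assms(4)
  define s where "s = psqnorm U q h n"
  define K where "K = m div 2"
  define u where "u = real n powr \<delta>"
  define t where "t = 22 * \<epsilon>"
  define Z where "Z = (\<lambda>x. (\<Sum>j<m. \<Sum>l\<in>{..<m}-{j}. if h (x j) = h (x l) then 1 else (0::real)) / (real m*(real m-1)))"
  have n0: "real n \<ge> 25" using assms(5) by simp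
  have s_low: "s \<ge> 1 / real n" unfolding s_def using psq_lower[OF U hU q1] assms(5) by simp
  have s0: "s > 0" using s_low n0 by (smt (verit) divide_pos_pos)
  have u1: "u \<ge> 1" unfolding u_def using n0 assms(8) by (intro ge_one_powr_ge_zero) auto
  have mreal: "\<epsilon>\<^sup>2 * real m = real n * u"
  proof -
    have "real n powr (1 + \<delta>) = real n * u" unfolding u_def using n0 by (simp add: powr_add)
    moreover have "\<epsilon>\<^sup>2 * \<epsilon> powr (-2) = 1" using assms(6) by (simp add: powr_minus powr_realpow power2_eq_square field_simps)
    ultimately show ?thesis using assms(9) by (metis mult.assoc mult.left_neutral)
  qed
  have eps2: "\<epsilon>\<^sup>2 < 1"
  proof -
    have "\<epsilon> * \<epsilon> < 1 * 1" using assms(6,7) by (intro mult_strict_mono) auto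
    then show ?thesis by (simp add: power2_eq_square)
  qed
  have eps2: "\<epsilon>\<^sup>2 < 1"
  proof -
    have "\<epsilon> * \<epsilon> < 1 * 1" using assms(6,7) by (intro mult_strict_mono) auto
    then show ?thesis by (simp add: power2_eq_square)
  qed
  have m2: "m \<ge> 2"
  proof -
    note eps2
    moreover have "real n * u \<ge> 25" using mult_left_mono[OF u1, of "real n"] n0 by linarith
    ultimately have "\<epsilon>\<^sup>2 * real m > \<epsilon>\<^sup>2 * 2" using mreal assms(6) by (smt (verit) mult_left_le_one_le zero_le_power2)
    then have "real m > 2" using assms(6) by (simp add: mult_less_cancel_left)
    then show ?thesis by simp
  qed
  have K_low: "real K \<ge> (real m - 1) / 2"
  proof -
    have "m \<le> 2 * K + 1" unfolding K_def by arith
    then have "real m \<le> real (2 * K + 1)" by (simp only: of_nat_le_iff)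
    then show ?thesis by simp
  qed
  have c0: "(\<Sum>u\<in>U. \<Sum>v\<in>U. q u * q v * (if h u = h v then 1 else 0)) = s"
    unfolding s_def by (rule c0_eq[OF U hU])
  have Kpos: "real K > 0" using m2 unfolding K_def by simp
  have expo: "real K * s * (\<epsilon>\<^sup>2 - \<epsilon> * t) \<le> - 2 * u"
  proof -
    have "real K * s \<ge> (real m - 1) / 2 * (1 / real n)"
      using K_low s_low m2 n0 by (intro mult_mono) auto
    then have "real K * s * (21 * \<epsilon>\<^sup>2) \<ge> (real m - 1) / 2 * (1 / real n) * (21 * \<epsilon>\<^sup>2)"
      by (intro mult_right_mono) auto
    moreover have "(real m - 1) / 2 * (1 / real n) * (21 * \<epsilon>\<^sup>2) = 21 * (real n * u - \<epsilon>\<^sup>2) / (2 * real n)"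
      using mreal n0 by (simp add: field_simps)
    moreover have "21 * (real n * u - \<epsilon>\<^sup>2) / (2 * real n) \<ge> 2 * u"
    proof -
      note eps2
      moreover have "real n * u \<ge> 25" using mult_left_mono[OF u1, of "real n"] n0 by linarith
      ultimately have "21 * (real n * u - \<epsilon>\<^sup>2) \<ge> 2 * u * (2 * real n)" by (simp add: algebra_simps)
      then show ?thesis using n0 by (simp add: le_divide_eq)
    qed
    moreover have "real K * s * (\<epsilon>\<^sup>2 - \<epsilon> * t) = - (real K * s * (21 * \<epsilon>\<^sup>2))"
      unfolding t_def by (simp add: power2_eq_square right_diff_distrib)
    ultimately show ?thesis by linarith
  qed
  have Zexpr: "(\<Sum>i=1..n. real (kcount h m x i) * (real (kcount h m x i) - 1) / (real m * (real m - 1))) * (1 / s) - 1 = Z x / s - 1"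
    if x: "x \<in> PiE {..<m} (\<lambda>_. U)" for x
  proof -
    have y: "\<forall>j<m. h (x j) \<in> {1..n}" using x hU by (auto simp: PiE_iff)
    have "(\<Sum>i=1..n. real (kcount h m x i) * (real (kcount h m x i) - 1) / (real m * (real m - 1)))
        = (\<Sum>i=1..n. real (kcount h m x i) * (real (kcount h m x i) - 1)) / (real m * (real m - 1))"
      by (simp add: sum_divide_distrib)
    also have "\<dots> = Z x" unfolding Z_def kcount_def using pairs_count[OF y] by simp
    finally show ?thesis by simp
  qed
  have M1: "SS U q m (\<lambda>x. exp ((\<epsilon> * real K) * Z x)) \<le> exp (real K * s * (exp \<epsilon> - 1))"
    using mgf[OF U q0 q1 m2, of "\<epsilon> * real K" h] Kpos unfolding c0 Z_def K_def by simp
  have M2: "SS U q m (\<lambda>x. exp ((- \<epsilon> * real K) * Z x)) \<le> exp (real K * s * (exp (- \<epsilon>) - 1))"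
    using mgf[OF U q0 q1 m2, of "- \<epsilon> * real K" h] Kpos unfolding c0 Z_def K_def by simp
  have eb1: "exp \<epsilon> \<le> 1 + \<epsilon> + \<epsilon>\<^sup>2" using assms(6,7) by (intro exp_bound) auto
  have eb2: "exp (- \<epsilon>) \<le> 1 - \<epsilon> + \<epsilon>\<^sup>2" using assms(6) by (intro exp_neg_bound) auto
  have Ks0: "real K * s \<ge> 0" using Kpos s0 by simp
  define E1 where "E1 = (\<lambda>x. exp (\<epsilon> * real K * Z x - \<epsilon> * real K * (1 + t) * s))"
  define E2 where "E2 = (\<lambda>x. exp (\<epsilon> * real K * (1 - t) * s - \<epsilon> * real K * Z x))"
  have T1: "SS U q m E1 \<le> exp (- 2 * u)"
  proof -
    have "SS U q m E1 = exp (- (\<epsilon> * real K * (1 + t) * s)) * SS U q m (\<lambda>x. exp ((\<epsilon> * real K) * Z x))"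
    proof -
      have "E1 = (\<lambda>x. exp (- (\<epsilon> * real K * (1 + t) * s)) * exp ((\<epsilon> * real K) * Z x))"
        unfolding E1_def by (rule ext, simp only: exp_add[symmetric], rule arg_cong[where f=exp], linarith)
      then show ?thesis by (simp only: SS_cmult)
    qed
    also have "\<dots> \<le> exp (- (\<epsilon> * real K * (1 + t) * s)) * exp (real K * s * (exp \<epsilon> - 1))"
      by (intro mult_left_mono M1) simp
    also have "\<dots> = exp (real K * s * (exp \<epsilon> - 1 - \<epsilon> * (1 + t)))"
    proof -
      have "- (\<epsilon> * real K * (1 + t) * s) + real K * s * (exp \<epsilon> - 1) = real K * s * (exp \<epsilon> - 1 - \<epsilon> * (1 + t))"
        by (simp add: algebra_simps)
      then show ?thesis by (simp only: exp_add[symmetric])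
    qed
    also have "\<dots> \<le> exp (real K * s * (\<epsilon>\<^sup>2 - \<epsilon> * t))"
    proof -
      have "exp \<epsilon> - 1 - \<epsilon> * (1 + t) \<le> \<epsilon>\<^sup>2 - \<epsilon> * t"
        using eb1 by (simp add: distrib_left)
      then show ?thesis using Ks0 by (intro exp_le_cancel_iff[THEN iffD2] mult_left_mono)
    qed
    also have "\<dots> \<le> exp (- 2 * u)" using expo by simp
    finally show ?thesis .
  qed
  have T2: "SS U q m E2 \<le> exp (- 2 * u)"
  proof -
    have "SS U q m E2 = exp (\<epsilon> * real K * (1 - t) * s) * SS U q m (\<lambda>x. exp ((- \<epsilon> * real K) * Z x))"
    proof -
      have "E2 = (\<lambda>x. exp (\<epsilon> * real K * (1 - t) * s) * exp ((- \<epsilon> * real K) * Z x))"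
        unfolding E2_def by (rule ext, simp only: exp_add[symmetric], rule arg_cong[where f=exp], linarith)
      then show ?thesis by (simp only: SS_cmult)
    qed
    also have "\<dots> \<le> exp (\<epsilon> * real K * (1 - t) * s) * exp (real K * s * (exp (- \<epsilon>) - 1))"
      by (intro mult_left_mono M2) simp
    also have "\<dots> = exp (real K * s * (exp (- \<epsilon>) - 1 + \<epsilon> * (1 - t)))"
    proof -
      have "\<epsilon> * real K * (1 - t) * s + real K * s * (exp (- \<epsilon>) - 1) = real K * s * (exp (- \<epsilon>) - 1 + \<epsilon> * (1 - t))"
        by (simp add: algebra_simps)
      then show ?thesis by (simp only: exp_add[symmetric])
    qed
    also have "\<dots> \<le> exp (real K * s * (\<epsilon>\<^sup>2 - \<epsilon> * t))"
    proof -
      have "exp (- \<epsilon>) - 1 + \<epsilon> * (1 - t) \<le> \<epsilon>\<^sup>2 - \<epsilon> * t"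
        using eb2 by (simp add: right_diff_distrib)
      then show ?thesis using Ks0 by (intro exp_le_cancel_iff[THEN iffD2] mult_left_mono)
    qed
    also have "\<dots> \<le> exp (- 2 * u)" using expo by simp
    finally show ?thesis .
  qed
  have pt: "(if \<bar>Z x / s - 1\<bar> \<le> t then 1 else 0) \<ge> 1 - (E1 x + E2 x)" for x
  proof (cases "\<bar>Z x / s - 1\<bar> \<le> t")
    case True
    have "E1 x > 0" "E2 x > 0" unfolding E1_def E2_def by auto
    then show ?thesis using True by simp
  next
    case False
    then have "Z x / s > 1 + t \<or> Z x / s < 1 - t" by linarith
    then have "Z x > (1 + t) * s \<or> Z x < (1 - t) * s" using s0 by (simp add: pos_less_divide_eq pos_divide_less_eq)
    then have "E1 x \<ge> 1 \<or> E2 x \<ge> 1"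
    proof
      assume "Z x > (1 + t) * s"
      then have "\<epsilon> * real K * Z x \<ge> \<epsilon> * real K * ((1 + t) * s)"
        using assms(6) Kpos by (intro mult_left_mono) auto
      then show ?thesis unfolding E1_def by (simp add: mult.assoc)
    next
      assume "Z x < (1 - t) * s"
      then have "\<epsilon> * real K * Z x \<le> \<epsilon> * real K * ((1 - t) * s)"
        using assms(6) Kpos by (intro mult_left_mono) auto
      then show ?thesis unfolding E2_def by (simp add: mult.assoc)
    qed
    moreover have "E1 x > 0" "E2 x > 0" unfolding E1_def E2_def by auto
    ultimately show ?thesis using False by auto
  qed
  have "prob_prod U q m (\<lambda>x. \<bar>(\<Sum>i=1..n. real (kcount h m x i) * (real (kcount h m x i) - 1)
              / (real m * (real m - 1))) * (1 / psqnorm U q h n) - 1\<bar> \<le> 22 * \<epsilon>)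
      = SS U q m (\<lambda>x. if \<bar>Z x / s - 1\<bar> \<le> t then 1 else 0)"
    unfolding prob_prod_SS[OF U]
  proof (rule SS_cong)
    fix x assume x: "x \<in> PiE {..<m} (\<lambda>_. U)"
    have e: "(\<Sum>i=1..n. real (kcount h m x i) * (real (kcount h m x i) - 1)
              / (real m * (real m - 1))) * (1 / psqnorm U q h n) - 1 = Z x / s - 1"
      using Zexpr[OF x] unfolding s_def .
    show "(if \<bar>(\<Sum>i=1..n. real (kcount h m x i) * (real (kcount h m x i) - 1)
              / (real m * (real m - 1))) * (1 / psqnorm U q h n) - 1\<bar> \<le> 22 * \<epsilon> then 1 else 0)
        = (if \<bar>Z x / s - 1\<bar> \<le> t then 1 else (0::real))"
      by (simp only: e t_def)
  qed
  also have "\<dots> \<ge> SS U q m (\<lambda>x. 1 - (E1 x + E2 x))"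
    by (rule SS_mono[OF q0 pt])
  also have "SS U q m (\<lambda>x. 1 - (E1 x + E2 x)) = 1 - (SS U q m E1 + SS U q m E2)"
    by (simp add: SS_diff SS_add SS_one[OF U q1])
  finally have "prob_prod U q m (\<lambda>x. \<bar>(\<Sum>i=1..n. real (kcount h m x i) * (real (kcount h m x i) - 1)
              / (real m * (real m - 1))) * (1 / psqnorm U q h n) - 1\<bar> \<le> 22 * \<epsilon>) \<ge> 1 - 2 * exp (- 2 * u)"
    using T1 T2 by linarith
  moreover have "2 * exp (- 2 * u) \<le> 10/9 * exp (- u)"
  proof -
    have "exp (- u) \<le> exp (-1)" using u1 by simp
    also have "exp (-1::real) \<le> 1/2"
    proof -
      have "exp (1::real) \<ge> 2" using exp_ge_add_one_self[of 1] by simp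
      then show ?thesis by (simp add: exp_minus field_simps)
    qed
    finally have "exp (- u) \<le> 1/2" .
    moreover have "exp (- 2 * u) = exp (- u) * exp (- u)" by (simp add: exp_add[symmetric])
    ultimately have "2 * exp (- 2 * u) \<le> exp (- u)"
      using mult_left_mono[of "exp (- u)" "1/2" "exp (- u)"] by simp
    then show ?thesis using exp_gt_zero[of "- u"] by linarith
  qed
  ultimately show ?thesis unfolding u_def by linarith
qed

end
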